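(* Let $h>0$, $0<\alpha\le 2$, $N=2^n$, and $M=2^m$ with $M\ge 2N$. Let $E^{(M)}$ be the $N\times N$ matrix with entries $(E^{(M)})_{ij}=\sum_{\ell\in\mathbb Z\setminus\{0\}}c_{i-j+\ell M}$ for $0\le i,j\le N-1$, where $c_r$ is the kernel defined in the context. Then \[ \|E^{(M)}\|_2\le \sum_{r\in\mathbb Z,\ |r|\ge M-N+1}|c_r|. \]
   Context: For $r\in\mathbb Z$, $c_r=\frac{h}{2\pi}\int_{-\pi/h}^{\pi/h}|\xi|^\alpha e^{i\xi h r}\,d\xi$ (the convolution kernel of the semi-discrete fractional Laplacian with symbol $|\xi|^\alpha$ on the lattice $h\mathbb Z$); it is real and even, $c_r=c_{-r}$. $\|\cdot\|_2$ denotes the spectral (operator 2-)norm. *)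

theory Defs
  imports "HOL-Analysis.Analysis"
begin

definition frac_kernel_cplx :: "real \<Rightarrow> real \<Rightarrow> int \<Rightarrow> complex" where
  "frac_kernel_cplx h \<alpha> r =
     complex_of_real (h / (2 * pi)) *
     integral {-pi/h..pi/h}
       (\<lambda>\<xi>. complex_of_real (\<bar>\<xi>\<bar> powr \<alpha>) * exp (\<i> * complex_of_real (\<xi> * h * of_int r)))"

text \<open>The kernel is real; c_r is its real part (the imaginary part vanishes).\<close>
definition frac_kernel :: "real \<Rightarrow> real \<Rightarrow> int \<Rightarrow> real" where
  "frac_kernel h \<alpha> r = Re (frac_kernel_cplx h \<alpha> r)"

definition spec_norm :: "nat \<Rightarrow> (nat \<Rightarrow> nat \<Rightarrow> real) \<Rightarrow> real" where
  "spec_norm N A = Sup {sqrt (\<Sum>i<N. (\<Sum>j<N. A i j * x j)^2) | x :: nat \<Rightarrow> real.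
                         (\<Sum>j<N. (x j)^2) = 1}"

definition E_mat :: "real \<Rightarrow> real \<Rightarrow> nat \<Rightarrow> nat \<Rightarrow> nat \<Rightarrow> real" where
  "E_mat h \<alpha> M i j = (\<Sum>\<^sub>\<infinity> l \<in> (UNIV - {0::int}). frac_kernel h \<alpha> (int i - int j + l * int M))"

end

theory Submission
  imports Defs
begin


lemma rowsum:
  fixes c :: "int \<Rightarrow> real" and off :: "nat \<Rightarrow> int" and N M :: nat
  assumes cs: "(\<lambda>r. \<bar>c r\<bar>) summable_on UNIV" and inj: "inj_on off {..<N}"
    and bd: "\<And>k. k < N \<Longrightarrow> \<bar>off k\<bar> \<le> int N - 1" and MN: "2*N \<le> M" and N0: "N > 0"
  shows "(\<Sum>k<N. \<bar>\<Sum>\<^sub>\<infinity>l\<in>UNIV-{0}. c (off k + l * int M)\<bar>)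
           \<le> (\<Sum>\<^sub>\<infinity> r \<in> {r::int. \<bar>r\<bar> \<ge> int M - int N + 1}. \<bar>c r\<bar>)"
proof -
  define S where "S = {r::int. \<bar>r\<bar> \<ge> int M - int N + 1}"
  define T where "T k = (\<lambda>l. off k + l * int M) ` (UNIV - {0})" for k
  have Mpos: "int M > 0" using MN N0 by linarith
  have injl: "inj_on (\<lambda>l. off k + l * int M) (UNIV - {0})" for k
    using Mpos by (auto simp: inj_on_def)
  have csA: "(\<lambda>r. \<bar>c r\<bar>) summable_on A" for A
    using summable_on_subset[OF cs] by blast
  have step1: "\<bar>\<Sum>\<^sub>\<infinity>l\<in>UNIV-{0}. c (off k + l * int M)\<bar> \<le> infsum (\<lambda>r. \<bar>c r\<bar>) (T k)" for k
  proof -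
    have "infsum (\<lambda>r. \<bar>c r\<bar>) (T k) = (\<Sum>\<^sub>\<infinity>l\<in>UNIV-{0}. \<bar>c (off k + l * int M)\<bar>)"
      unfolding T_def by (subst infsum_reindex[OF injl]) (simp add: comp_def)
    moreover have "(\<lambda>l. \<bar>c (off k + l * int M)\<bar>) summable_on (UNIV - {0})"
      using csA[of "T k"] unfolding T_def by (subst (asm) summable_on_reindex[OF injl]) (simp add: comp_def)
    hence "\<bar>\<Sum>\<^sub>\<infinity>l\<in>UNIV-{0}. c (off k + l * int M)\<bar> \<le> (\<Sum>\<^sub>\<infinity>l\<in>UNIV-{0}. \<bar>c (off k + l * int M)\<bar>)"
      using norm_infsum_bound[of "\<lambda>l. c (off k + l * int M)" "UNIV - {0}"] by simp
    ultimately show ?thesis by simp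
  qed
  have disj: "T k \<inter> T k' = {}" if "k < N" "k' < N" "k \<noteq> k'" for k k'
  proof (rule ccontr)
    assume "T k \<inter> T k' \<noteq> {}"
    then obtain l l' where e: "off k + l * int M = off k' + l' * int M"
      unfolding T_def by auto
    have ne: "off k \<noteq> off k'" using inj that by (auto simp: inj_on_def)
    have "\<bar>off k - off k'\<bar> < int M" using bd[OF that(1)] bd[OF that(2)] MN by linarith
    moreover have "off k - off k' = (l' - l) * int M" using e by (simp add: algebra_simps)
    moreover have "l' \<noteq> l" using e ne by auto
    hence "\<bar>(l' - l) * int M\<bar> \<ge> int M" using Mpos by (simp add: abs_mult)
    ultimately show False by linarith
  qed
  have sub: "(\<Union>k\<in>{..<N}. T k) \<subseteq> S"
  proof
    fix r assume "r \<in> (\<Union>k\<in>{..<N}. T k)"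
    then obtain k l where k: "k < N" and l: "l \<noteq> 0" and r: "r = off k + l * int M"
      unfolding T_def by auto
    have "\<bar>l * int M\<bar> \<ge> int M" using l Mpos by (simp add: abs_mult)
    thus "r \<in> S" using bd[OF k] r unfolding S_def by auto
  qed
  have "(\<Sum>k<N. \<bar>\<Sum>\<^sub>\<infinity>l\<in>UNIV-{0}. c (off k + l * int M)\<bar>) \<le> (\<Sum>k<N. infsum (\<lambda>r. \<bar>c r\<bar>) (T k))"
    by (rule sum_mono) (rule step1)
  also have "\<dots> = infsum (\<lambda>r. \<bar>c r\<bar>) (\<Union>k\<in>{..<N}. T k)"
    by (rule sum_infsum) (simp_all add: csA disj)
  also have "\<dots> \<le> infsum (\<lambda>r. \<bar>c r\<bar>) S"
    by (rule infsum_mono_neutral) (use sub csA in auto)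
  finally show ?thesis unfolding S_def .
qed

lemma spec_bound:
  fixes A :: "nat \<Rightarrow> nat \<Rightarrow> real" and R :: real
  assumes row: "\<And>i. i < N \<Longrightarrow> (\<Sum>j<N. \<bar>A i j\<bar>) \<le> R"
    and col: "\<And>j. j < N \<Longrightarrow> (\<Sum>i<N. \<bar>A i j\<bar>) \<le> R" and N: "N > 0"
  shows "spec_norm N A \<le> R"
proof -
  have R0: "R \<ge> 0" using row[OF N] by (meson order.trans sum_nonneg abs_ge_zero)
  have key: "sqrt (\<Sum>i<N. (\<Sum>j<N. A i j * x j)^2) \<le> R" if x: "(\<Sum>j<N. (x j)^2) = 1" for x
  proof -
    have ri: "(\<Sum>j<N. A i j * x j)^2 \<le> R * (\<Sum>j<N. \<bar>A i j\<bar> * (x j)^2)" if i: "i < N" for i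
    proof -
      have "\<bar>\<Sum>j<N. A i j * x j\<bar> \<le> (\<Sum>j<N. sqrt \<bar>A i j\<bar> * (sqrt \<bar>A i j\<bar> * \<bar>x j\<bar>))"
        by (rule order.trans[OF sum_abs]) (simp add: abs_mult mult.assoc[symmetric])
      hence "(\<Sum>j<N. A i j * x j)^2 \<le> (\<Sum>j<N. sqrt \<bar>A i j\<bar> * (sqrt \<bar>A i j\<bar> * \<bar>x j\<bar>))^2"
        by (metis abs_ge_zero power2_abs power_mono)
      also have "\<dots> \<le> (\<Sum>j<N. (sqrt \<bar>A i j\<bar>)^2) * (\<Sum>j<N. (sqrt \<bar>A i j\<bar> * \<bar>x j\<bar>)^2)"
        by (rule Cauchy_Schwarz_ineq_sum)
      also have "\<dots> = (\<Sum>j<N. \<bar>A i j\<bar>) * (\<Sum>j<N. \<bar>A i j\<bar> * (x j)^2)"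
        by (simp add: power_mult_distrib)
      also have "\<dots> \<le> R * (\<Sum>j<N. \<bar>A i j\<bar> * (x j)^2)"
        by (rule mult_right_mono[OF row[OF i]]) (simp add: sum_nonneg)
      finally show ?thesis .
    qed
    have "(\<Sum>i<N. (\<Sum>j<N. A i j * x j)^2) \<le> (\<Sum>i<N. R * (\<Sum>j<N. \<bar>A i j\<bar> * (x j)^2))"
      by (rule sum_mono) (simp add: ri)
    also have "\<dots> = R * (\<Sum>i<N. \<Sum>j<N. \<bar>A i j\<bar> * (x j)^2)"
      by (simp add: sum_distrib_left)
    also have "\<dots> = R * (\<Sum>j<N. \<Sum>i<N. \<bar>A i j\<bar> * (x j)^2)"
      by (subst sum.swap) (rule refl)
    also have "\<dots> = R * (\<Sum>j<N. (x j)^2 * (\<Sum>i<N. \<bar>A i j\<bar>))"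
      by (simp add: sum_distrib_left mult.commute)
    also have "\<dots> \<le> R * (\<Sum>j<N. (x j)^2 * R)"
      by (intro mult_left_mono[OF _ R0] sum_mono mult_left_mono) (auto intro: col)
    also have "\<dots> = R^2" using x by (simp add: sum_distrib_right[symmetric] power2_eq_square)
    finally show ?thesis using R0 by (metis real_sqrt_abs real_sqrt_le_mono abs_of_nonneg)
  qed
  have ne: "{sqrt (\<Sum>i<N. (\<Sum>j<N. A i j * x j)^2) | x :: nat \<Rightarrow> real. (\<Sum>j<N. (x j)^2) = 1} \<noteq> {}"
  proof -
    define x0 :: "nat \<Rightarrow> real" where "x0 = (\<lambda>j. if j = 0 then 1 else 0)"
    have "(\<Sum>j<N. (x0 j)^2) = (\<Sum>j<N. x0 j)" by (rule sum.cong) (auto simp: x0_def)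
    also have "\<dots> = 1" using N unfolding x0_def by (subst sum.delta) auto
    finally show ?thesis by blast
  qed
  show ?thesis unfolding spec_norm_def
    by (rule cSup_least[OF ne]) (use key in blast)
qed



lemma one_minus_cos_bound:
  fixes x e :: real
  assumes e0: "0 \<le> e" and e2: "e \<le> 2"
  shows "1 - cos x \<le> 2 * \<bar>x\<bar> powr e"
proof -
  define s where "s = \<bar>sin (x/2)\<bar>"
  have cx: "1 - cos x = 2 * s^2"
    using cos_double_sin[of "x/2"] by (simp add: s_def power2_abs)
  have s1: "s \<le> 1" unfolding s_def by simp
  have sx: "s \<le> \<bar>x\<bar>" unfolding s_def using abs_sin_x_le_abs_x[of "x/2"] by simp
  show ?thesis
  proof (cases "s = 0")
    case True thus ?thesis using cx by simp
  next
    case False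
    hence sp: "s > 0" unfolding s_def by simp
    have "s^2 = s powr 2" using sp by (simp add: powr_numeral)
    also have "\<dots> \<le> s powr e" by (rule powr_mono'[OF e2]) (use sp s1 in auto)
    also have "\<dots> \<le> \<bar>x\<bar> powr e" by (rule powr_mono2[OF e0]) (use sp sx in auto)
    finally show ?thesis using cx by simp
  qed
qed

lemma P_deriv:
  fixes x w \<alpha> :: real assumes xp: "x > 0" and w: "w \<noteq> 0"
  shows "((\<lambda>x. x powr \<alpha> * sin (w * x) / w - \<alpha> * x powr (\<alpha> - 1) * (1 - cos (w * x)) / w^2) has_real_derivative
     (x powr \<alpha> * cos (w * x) - \<alpha> * (\<alpha> - 1) * x powr (\<alpha> - 2) * (1 - cos (w * x)) / w^2)) (at x)"
proof -
  have d1: "((\<lambda>x. x powr \<alpha>) has_real_derivative \<alpha> * x powr (\<alpha> - 1)) (at x)"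
    by (rule has_real_derivative_powr[OF xp])
  have d2: "((\<lambda>x. x powr (\<alpha> - 1)) has_real_derivative (\<alpha> - 1) * x powr (\<alpha> - 2)) (at x)"
    using has_real_derivative_powr[OF xp, of "\<alpha> - 1"] by (simp add: algebra_simps)
  have ds: "((\<lambda>x. sin (w * x)) has_real_derivative cos (w * x) * w) (at x)"
    by (auto intro!: derivative_eq_intros)
  have dc: "((\<lambda>x. 1 - cos (w * x)) has_real_derivative sin (w * x) * w) (at x)"
    by (auto intro!: derivative_eq_intros)
  note D = DERIV_diff[OF DERIV_cdivide[OF DERIV_mult[OF d1 ds], of w] DERIV_cdivide[OF DERIV_mult[OF DERIV_cmult[OF d2, of \<alpha>] dc], of "w^2"]]
  show ?thesis
    by (rule DERIV_cong[OF D]) (use w in \<open>simp add: field_simps power2_eq_square\<close>)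
qed

lemma contH:
  fixes a w \<alpha> :: real assumes al: "\<alpha> > 0"
  shows "continuous_on {0..a} (\<lambda>x. x powr (\<alpha> - 1) * (1 - cos (w * x)))"
proof -
  let ?H = "\<lambda>x. x powr (\<alpha> - 1) * (1 - cos (w * x))"
  have "continuous (at x within {0..a}) ?H" if x: "x \<in> {0..a}" for x
  proof (cases "x = 0")
    case False
    hence "x > 0" using x by simp
    hence "isCont ?H x" by (intro continuous_intros) auto
    thus ?thesis using continuous_at_imp_continuous_at_within by blast
  next
    case True
    have ev: "eventually (\<lambda>y. norm (?H y) \<le> 2 * w^2 * y powr (\<alpha> + 1)) (at 0 within {0..a})"
      unfolding eventually_at_filter
    proof (rule always_eventually, intro allI impI)
      fix y :: real assume "y \<noteq> 0" "y \<in> {0..a}"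
      hence yp: "y > 0" by simp
      have c: "1 - cos (w * y) \<le> 2 * \<bar>w * y\<bar> powr 2" by (rule one_minus_cos_bound) auto
      have "norm (?H y) = y powr (\<alpha> - 1) * (1 - cos (w * y))" using yp by (simp add: abs_mult)
      also have "\<dots> \<le> y powr (\<alpha> - 1) * (2 * \<bar>w * y\<bar> powr 2)"
        using c by (intro mult_left_mono) auto
      also have "\<bar>w * y\<bar> powr 2 = w^2 * y powr 2"
        using yp by (simp add: abs_mult powr_mult power2_eq_square powr_numeral)
      also have "y powr (\<alpha> - 1) * (2 * (w^2 * y powr 2)) = 2 * w^2 * (y powr (\<alpha> - 1) * y powr 2)"
        by (simp add: algebra_simps)
      also have "y powr (\<alpha> - 1) * y powr 2 = y powr (\<alpha> + 1)"
        by (subst powr_add[symmetric]) (rule arg_cong[where f="\<lambda>t. y powr t"], simp)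
      finally show "norm (?H y) \<le> 2 * w^2 * y powr (\<alpha> + 1)" .
    qed
    have lim: "((\<lambda>y. 2 * w^2 * y powr (\<alpha> + 1)) \<longlongrightarrow> 0) (at 0 within {0..a})"
    proof -
      have "((\<lambda>y::real. y powr (\<alpha> + 1)) \<longlongrightarrow> 0) (at 0 within {0..a})"
        by (rule tendsto_zero_powrI[of _ _ _ "\<alpha> + 1"])
           (use al in \<open>auto intro!: tendsto_intros simp: eventually_at_filter\<close>)
      from tendsto_mult_right_zero[OF this, of "2 * w^2"] show ?thesis by (simp add: mult.commute)
    qed
    have "(?H \<longlongrightarrow> 0) (at 0 within {0..a})" by (rule Lim_null_comparison[OF ev lim])
    thus ?thesis using True by (simp add: continuous_within)
  qed
  thus ?thesis using continuous_on_eq_continuous_within by blast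
qed

lemma half_integral:
  fixes a w \<alpha> :: real
  assumes a: "a > 0" and w: "w \<noteq> 0" and al: "0 < \<alpha>" "\<alpha> \<le> 2" and sw: "sin (w * a) = 0"
  shows "\<exists>J. ((\<lambda>x. x powr \<alpha> * cos (w * x)) has_integral J) {0..a} \<and>
     \<bar>J\<bar> \<le> 2 * \<alpha> * a powr (\<alpha> - 1) / w^2 + 4 * \<bar>\<alpha> - 1\<bar> * \<bar>w\<bar> powr (1 - \<alpha>/2) * a powr (\<alpha>/2) / w^2"
proof -
  define F where "F x = x powr \<alpha> * cos (w * x)" for x
  define P where "P x = x powr \<alpha> * sin (w * x) / w - \<alpha> * x powr (\<alpha> - 1) * (1 - cos (w * x)) / w^2" for x
  define G where "G x = \<alpha> * (\<alpha> - 1) * x powr (\<alpha> - 2) * (1 - cos (w * x)) / w^2" for x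
  define e where "e = 1 - \<alpha>/2"
  have e0: "0 \<le> e" "e \<le> 2" using al unfolding e_def by auto
  have contF: "continuous_on {0..a} F"
    unfolding F_def by (intro continuous_intros continuous_on_powr') (use al in auto)
  then obtain J where J: "(F has_integral J) {0..a}"
    using integrable_continuous_interval by blast
  have deriv: "(P has_vector_derivative (F x - G x)) (at x)" if x: "x \<in> {0<..<a}" for x
  proof -
    have xp: "x > 0" using x by simp
    have "(P has_real_derivative (F x - G x)) (at x)"
      unfolding P_def F_def G_def by (rule P_deriv[OF xp w])
    thus ?thesis by (simp add: has_real_derivative_iff_has_vector_derivative)
  qed
  have contP: "continuous_on {0..a} P"
  proof -
    have c1: "continuous_on {0..a} (\<lambda>x. x powr \<alpha>)"
      by (intro continuous_intros continuous_on_powr') (use al in auto)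
    have c2: "continuous_on {0..a} (\<lambda>x. x powr (\<alpha> - 1) * (1 - cos (w * x)))"
      by (rule contH) (use al in auto)
    have c3: "continuous_on {0..a} (\<lambda>x. sin (w * x))" by (intro continuous_intros)
    have "continuous_on {0..a} (\<lambda>x. x powr \<alpha> * sin (w * x) * (1/w) - (x powr (\<alpha> - 1) * (1 - cos (w * x))) * (\<alpha>/w^2))"
      by (rule continuous_on_diff continuous_on_mult c1 c2 c3 continuous_on_const)+
    thus ?thesis unfolding P_def by (rule continuous_on_eq) (simp add: field_simps)
  qed
  have FTC: "((\<lambda>x. F x - G x) has_integral (P a - P 0)) {0..a}"
    by (rule fundamental_theorem_of_calculus_interior_strong[of "{}"]) (use deriv contP a in auto)
  have P0: "P 0 = 0" unfolding P_def by simp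
  have Pa: "\<bar>P a\<bar> \<le> 2 * \<alpha> * a powr (\<alpha> - 1) / w^2"
  proof -
    have "\<bar>P a\<bar> = \<alpha> * a powr (\<alpha> - 1) * \<bar>1 - cos (w * a)\<bar> / w^2"
      unfolding P_def using sw al by (simp add: mult.commute[of a w] abs_mult abs_divide)
    also have "\<dots> \<le> \<alpha> * a powr (\<alpha> - 1) * 2 / w^2"
      using al by (intro divide_right_mono mult_left_mono) (auto simp: abs_le_iff)
    finally show ?thesis by (simp add: mult_ac)
  qed
  have Gint: "(G has_integral (J - (P a - P 0))) {0..a}"
    using has_integral_diff[OF J FTC] by simp
  define K where "K = 2 * \<alpha> * \<bar>\<alpha> - 1\<bar> * \<bar>w\<bar> powr e / w^2"
  have Kint: "((\<lambda>x. K * x powr (\<alpha>/2 - 1)) has_integral (K * (a powr (\<alpha>/2) / (\<alpha>/2)))) {0..a}"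
    using has_integral_mult_right[OF has_integral_powr_from_0[of "\<alpha>/2 - 1" a]] al a by simp
  have Gbd: "norm (G x) \<le> K * x powr (\<alpha>/2 - 1)" if x: "x \<in> {0..a}" for x
  proof (cases "x = 0")
    case True thus ?thesis by (simp add: G_def)
  next
    case False
    hence xp: "x > 0" using x by simp
    have c: "1 - cos (w * x) \<le> 2 * \<bar>w * x\<bar> powr e" by (rule one_minus_cos_bound[OF e0])
    have c0: "0 \<le> 1 - cos (w * x)" by simp
    have "norm (G x) = \<alpha> * \<bar>\<alpha> - 1\<bar> * x powr (\<alpha> - 2) * (1 - cos (w * x)) / w^2"
      unfolding G_def using al by (simp add: abs_mult abs_divide)
    also have "\<dots> \<le> \<alpha> * \<bar>\<alpha> - 1\<bar> * x powr (\<alpha> - 2) * (2 * \<bar>w * x\<bar> powr e) / w^2"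
      using al c by (intro divide_right_mono mult_left_mono) auto
    also have "\<bar>w * x\<bar> powr e = \<bar>w\<bar> powr e * x powr e"
      using xp by (simp add: abs_mult powr_mult)
    also have "x powr (\<alpha> - 2) * x powr e = x powr (\<alpha>/2 - 1)"
      using xp by (simp add: powr_add[symmetric] e_def)
    hence "\<alpha> * \<bar>\<alpha> - 1\<bar> * x powr (\<alpha> - 2) * (2 * (\<bar>w\<bar> powr e * x powr e)) / w^2 = K * x powr (\<alpha>/2 - 1)"
      unfolding K_def by (simp add: field_simps)
    finally show ?thesis .
  qed
  have "\<bar>J - P a\<bar> \<le> K * (a powr (\<alpha>/2) / (\<alpha>/2))"
    using integral_norm_bound_integral[OF has_integral_integrable[OF Gint] has_integral_integrable[OF Kint] Gbd]
      integral_unique[OF Gint] integral_unique[OF Kint] P0 by simp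
  also have "\<dots> = 4 * \<bar>\<alpha> - 1\<bar> * \<bar>w\<bar> powr (1 - \<alpha>/2) * a powr (\<alpha>/2) / w^2"
    unfolding K_def e_def using al by (simp add: field_simps)
  finally have "\<bar>J\<bar> \<le> 2 * \<alpha> * a powr (\<alpha> - 1) / w^2 + 4 * \<bar>\<alpha> - 1\<bar> * \<bar>w\<bar> powr (1 - \<alpha>/2) * a powr (\<alpha>/2) / w^2"
    using Pa by linarith
  thus ?thesis using J unfolding F_def by blast
qed



lemma kernel_eq:
  fixes h \<alpha> J :: real and r :: int
  assumes h: "h > 0" and al: "0 < \<alpha>"
    and J: "((\<lambda>x. x powr \<alpha> * cos ((h * of_int r) * x)) has_integral J) {0..pi/h}"
  shows "frac_kernel h \<alpha> r = h / pi * J"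
proof -
  define a where "a = pi / h"
  have a: "a > 0" unfolding a_def using h by simp
  define f where "f \<xi> = complex_of_real (\<bar>\<xi>\<bar> powr \<alpha>) * exp (\<i> * complex_of_real (\<xi> * h * of_int r))" for \<xi>
  define Fr where "Fr \<xi> = \<bar>\<xi>\<bar> powr \<alpha> * cos (\<xi> * h * of_int r)" for \<xi>
  have cf: "continuous_on {-a..a} f"
    unfolding f_def by (intro continuous_intros continuous_on_powr') (use al in auto)
  have ReF: "Re \<circ> f = Fr"
    by (rule ext) (simp add: f_def Fr_def Re_exp)
  have J0: "(Fr has_integral J) {0..a}"
    by (rule has_integral_eq[OF _ J[folded a_def]]) (auto simp: Fr_def mult_ac)
  have J1: "(Fr has_integral J) {-a..0}"
  proof -
    have "((\<lambda>x. Fr (- x)) has_integral J) {0..a}"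
      by (rule has_integral_eq[OF _ J0]) (simp add: Fr_def)
    thus ?thesis using has_integral_reflect_real[where f=Fr and i=J and a="-a" and b=0] by simp
  qed
  have JJ: "(Fr has_integral (J + J)) {-a..a}"
    by (rule has_integral_combine[of "-a" 0 a, OF _ _ J1 J0]) (use a in auto)
  have "((Re \<circ> f) has_integral Re (integral {-a..a} f)) {-a..a}"
    by (rule has_integral_linear[OF integrable_integral[OF integrable_continuous_interval[OF cf]] bounded_linear_Re])
  hence "Re (integral {-a..a} f) = J + J"
    using JJ ReF has_integral_unique by metis
  moreover have ma: "-pi/h = -a" unfolding a_def by simp
  ultimately show ?thesis
    unfolding frac_kernel_def frac_kernel_cplx_def f_def[symmetric] ma a_def[symmetric]
    by (simp add: field_simps)
qed



lemma kernel_bound: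
  fixes h \<alpha> :: real and r :: int
  assumes h: "h > 0" and al: "0 < \<alpha>" "\<alpha> \<le> 2" and r: "r \<noteq> 0"
  shows "\<bar>frac_kernel h \<alpha> r\<bar> \<le>
     (h / pi * (2 * \<alpha> * (pi/h) powr (\<alpha> - 1) / h^2)) * \<bar>real_of_int r\<bar> powr (-2)
   + (h / pi * (4 * \<bar>\<alpha> - 1\<bar> * h powr (-1 - \<alpha>/2) * (pi/h) powr (\<alpha>/2))) * \<bar>real_of_int r\<bar> powr (-1 - \<alpha>/2)"
proof -
  define a where "a = pi / h"
  define w where "w = h * of_int r"
  define R where "R = \<bar>real_of_int r\<bar>"
  have a: "a > 0" unfolding a_def using h by simp
  have R: "R > 0" unfolding R_def using r by simp
  have w: "w \<noteq> 0" unfolding w_def using h r by simp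
  have wa: "w * a = of_int r * pi" unfolding w_def a_def using h by simp
  have sw: "sin (w * a) = 0" unfolding wa by (simp add: sin_zero_iff_int2)
  obtain J where J: "((\<lambda>x. x powr \<alpha> * cos (w * x)) has_integral J) {0..a}"
    and Jb: "\<bar>J\<bar> \<le> 2 * \<alpha> * a powr (\<alpha> - 1) / w^2 + 4 * \<bar>\<alpha> - 1\<bar> * \<bar>w\<bar> powr (1 - \<alpha>/2) * a powr (\<alpha>/2) / w^2"
    using half_integral[OF a w al sw] by blast
  have c: "frac_kernel h \<alpha> r = h / pi * J"
    by (rule kernel_eq[OF h al(1)]) (use J in \<open>simp add: w_def a_def\<close>)
  have absw: "\<bar>w\<bar> = h * R" unfolding w_def R_def using h by (simp add: abs_mult)
  have w2: "w^2 = h^2 * R powr 2"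
    using R by (simp add: w_def R_def power_mult_distrib powr_numeral)
  have e1: "1 / w^2 = 1 / h^2 * R powr (-2)"
    using R h unfolding w2 by (simp add: powr_minus field_simps)
  have e2: "\<bar>w\<bar> powr (1 - \<alpha>/2) / w^2 = h powr (-1 - \<alpha>/2) * R powr (-1 - \<alpha>/2)"
  proof -
    have wsq: "w^2 = \<bar>w\<bar> powr 2" using w by (simp add: powr_numeral)
    have "\<bar>w\<bar> powr (1 - \<alpha>/2) / w^2 = \<bar>w\<bar> powr (1 - \<alpha>/2) / \<bar>w\<bar> powr 2"
      by (simp only: wsq)
    also have "\<dots> = \<bar>w\<bar> powr (1 - \<alpha>/2 - 2)"
      by (rule powr_diff[symmetric])
    also have "\<dots> = (h * R) powr (-1 - \<alpha>/2)" unfolding absw by (simp add: algebra_simps)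
    also have "\<dots> = h powr (-1 - \<alpha>/2) * R powr (-1 - \<alpha>/2)"
      using h R by (simp add: powr_mult)
    finally show ?thesis .
  qed
  have "\<bar>frac_kernel h \<alpha> r\<bar> = h / pi * \<bar>J\<bar>" unfolding c using h by (simp add: abs_mult)
  also have "\<dots> \<le> h / pi * (2 * \<alpha> * a powr (\<alpha> - 1) / w^2 + 4 * \<bar>\<alpha> - 1\<bar> * \<bar>w\<bar> powr (1 - \<alpha>/2) * a powr (\<alpha>/2) / w^2)"
    using Jb h by (intro mult_left_mono) auto
  also have "2 * \<alpha> * a powr (\<alpha> - 1) / w^2 = 2 * \<alpha> * a powr (\<alpha> - 1) * (1 / w^2)" by simp
  also have "4 * \<bar>\<alpha> - 1\<bar> * \<bar>w\<bar> powr (1 - \<alpha>/2) * a powr (\<alpha>/2) / w^2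
      = 4 * \<bar>\<alpha> - 1\<bar> * a powr (\<alpha>/2) * (\<bar>w\<bar> powr (1 - \<alpha>/2) / w^2)" by simp
  finally show ?thesis unfolding e1 e2 a_def[symmetric] R_def[symmetric]
    by (simp add: algebra_simps)
qed

lemma int_powr_summable:
  fixes p :: real assumes p: "p > 1"
  shows "(\<lambda>r::int. \<bar>real_of_int r\<bar> powr (-p)) summable_on UNIV"
proof -
  let ?g = "\<lambda>r::int. \<bar>real_of_int r\<bar> powr (-p)"
  have s: "(\<lambda>n::nat. real n powr (-p)) summable_on UNIV"
    by (rule summable_nonneg_imp_summable_on) (use p summable_real_powr_iff in auto)
  have s1: "?g summable_on (range int)"
    by (subst summable_on_reindex) (use s in \<open>auto simp: comp_def inj_on_def\<close>)
  have s2: "?g summable_on (range (\<lambda>n. - int n))"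
    by (subst summable_on_reindex) (use s in \<open>auto simp: comp_def inj_on_def\<close>)
  have U: "range int \<union> range (\<lambda>n. - int n) = (UNIV :: int set)"
  proof (rule set_eqI, rule iffI)
    fix r :: int
    show "r \<in> range int \<union> range (\<lambda>n. - int n)"
    proof (cases "r \<ge> 0")
      case True thus ?thesis by (metis UnI1 nonneg_int_cases rangeI)
    next
      case False hence "r = - int (nat (-r))" by simp
      thus ?thesis by blast
    qed
  qed auto
  show ?thesis using summable_on_union[OF s1 s2] unfolding U .
qed

lemma kernel_summable:
  fixes h \<alpha> :: real
  assumes h: "h > 0" and al: "0 < \<alpha>" "\<alpha> \<le> 2"
  shows "(\<lambda>r. \<bar>frac_kernel h \<alpha> r\<bar>) summable_on UNIV"
proof -
  define A where "A = h / pi * (2 * \<alpha> * (pi/h) powr (\<alpha> - 1) / h^2)"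
  define B where "B = h / pi * (4 * \<bar>\<alpha> - 1\<bar> * h powr (-1 - \<alpha>/2) * (pi/h) powr (\<alpha>/2))"
  have s1: "(\<lambda>r::int. \<bar>real_of_int r\<bar> powr (-2)) summable_on UNIV"
    using int_powr_summable[of 2] by simp
  have s2: "(\<lambda>r::int. \<bar>real_of_int r\<bar> powr (-1 - \<alpha>/2)) summable_on UNIV"
    using int_powr_summable[of "1 + \<alpha>/2"] al by (simp add: algebra_simps)
  have s: "(\<lambda>r::int. A * \<bar>real_of_int r\<bar> powr (-2) + B * \<bar>real_of_int r\<bar> powr (-1 - \<alpha>/2)) summable_on (UNIV - {0})"
    by (rule summable_on_subset[OF summable_on_add[OF summable_on_cmult_right[OF s1] summable_on_cmult_right[OF s2]]]) auto
  have "(\<lambda>r. \<bar>frac_kernel h \<alpha> r\<bar>) summable_on (UNIV - {0})"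
    by (rule summable_on_comparison_test[OF s]) (use kernel_bound[OF h al] in \<open>auto simp: A_def B_def\<close>)
  hence "(\<lambda>r. \<bar>frac_kernel h \<alpha> r\<bar>) summable_on insert 0 (UNIV - {0})"
    by (subst summable_on_insert_iff)
  thus ?thesis by (simp add: insert_UNIV)
qed


theorem mainTheorem3:
  fixes h \<alpha> :: real and n m N M :: nat
  assumes "h > 0" and "0 < \<alpha>" and "\<alpha> \<le> 2"
    and "N = 2 ^ n" and "M = 2 ^ m" and "M \<ge> 2 * N"
  shows "spec_norm N (E_mat h \<alpha> M)
           \<le> (\<Sum>\<^sub>\<infinity> r \<in> {r::int. \<bar>r\<bar> \<ge> int M - int N + 1}. \<bar>frac_kernel h \<alpha> r\<bar>)"
proof -
  have N0: "N > 0" using assms(4) by simp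
  have MN: "2 * N \<le> M" using assms(6) by simp
  note cs = kernel_summable[OF assms(1-3)]
  show ?thesis
  proof (rule spec_bound[OF _ _ N0])
    fix i assume i: "i < N"
    show "(\<Sum>j<N. \<bar>E_mat h \<alpha> M i j\<bar>)
        \<le> (\<Sum>\<^sub>\<infinity> r \<in> {r::int. \<bar>r\<bar> \<ge> int M - int N + 1}. \<bar>frac_kernel h \<alpha> r\<bar>)"
      unfolding E_mat_def
      by (rule rowsum[OF cs, of "\<lambda>j. int i - int j" N M, simplified])
         (use i MN N0 in \<open>auto simp: inj_on_def\<close>)
  next
    fix j assume j: "j < N"
    show "(\<Sum>i<N. \<bar>E_mat h \<alpha> M i j\<bar>)
        \<le> (\<Sum>\<^sub>\<infinity> r \<in> {r::int. \<bar>r\<bar> \<ge> int M - int N + 1}. \<bar>frac_kernel h \<alpha> r\<bar>)"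
      unfolding E_mat_def
      by (rule rowsum[OF cs, of "\<lambda>i. int i - int j" N M, simplified])
         (use j MN N0 in \<open>auto simp: inj_on_def\<close>)
  qed
qed

end
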